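(* Let $A \subset \mathbb{Z}$ be a finite set with $\min A = 0$, $\max A = b$, and $\gcd A = 1$. Let $\mathcal{C}_A = \{\sum_{a \in A} n_a (a,1) : n_a \in \mathbb{N}\} \subset \mathbb{Z}^2$, $\Lambda = \{(bn, m+n) : m,n \in \mathbb{Z}\}$, and $\Lambda^+ = \{(bn, m+n) : m,n \in \mathbb{N}\}$. For $a \in \{0,\ldots,b-1\}$ let $\mathcal{S}_a$ be the set of points of $\mathcal{C}_A$ congruent to $(a,1)$ modulo $\Lambda$, and let $(g_a,h_a) \in \mathbb{N}^2$ be the unique point such that $\mathcal{S}_a \subseteq (g_a,h_a) + \Lambda^+$ and $((g_a,h_a) + \Lambda^+) \setminus \mathcal{S}_a$ is finite. Let $T_0(A) = \bigcup_{h \geq 0} hA$. Then \[ T_0(A) = \bigcup_{a=0}^{b-1} \big( g_a + b\cdot\mathbb{N} \big), \] where $b\cdot\mathbb{N} = \{0, b, 2b, \ldots\}$.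
   Context: $\mathbb{N} = \{0,1,2,\ldots\}$; $hA = \{a_1 + \cdots + a_h : a_i \in A\}$ with $0A = \{0\}$. The existence and uniqueness of $(g_a,h_a)$ as described is part of the setting (it is proved in the paper). *)

theory Defs
  imports Main
begin

definition sumset :: "nat \<Rightarrow> int set \<Rightarrow> int set" where
  "sumset h A = {(\<Sum>i<h. f i) | f. \<forall>i<h. f i \<in> A}"

definition coneA :: "int set \<Rightarrow> (int \<times> int) set" where
  "coneA A = {((\<Sum>a\<in>A. int (n a) * a), (\<Sum>a\<in>A. int (n a))) | n :: int \<Rightarrow> nat. True}"

definition Lat :: "int \<Rightarrow> (int \<times> int) set" where
  "Lat b = {(b * n, m + n) | m n :: int. True}"

definition LatPlus :: "int \<Rightarrow> (int \<times> int) set" where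
  "LatPlus b = {(b * int n, int m + int n) | m n :: nat. True}"

definition Sa :: "int set \<Rightarrow> int \<Rightarrow> int \<Rightarrow> (int \<times> int) set" where
  "Sa A b a = {p \<in> coneA A. (fst p - a, snd p - 1) \<in> Lat b}"

definition translate :: "int \<times> int \<Rightarrow> (int \<times> int) set \<Rightarrow> (int \<times> int) set" where
  "translate p X = {(fst p + fst q, snd p + snd q) | q. q \<in> X}"

end

theory Submission
  imports Defs
begin

lemma sumset_add1:
  assumes "x \<in> sumset k A" "a \<in> A" shows "x + a \<in> sumset (Suc k) A"
proof -
  obtain f where f: "x = (\<Sum>i<k. f i)" "\<forall>i<k. f i \<in> A" using assms(1) unfolding sumset_def by blast
  let ?g = "f(k := a)"
  have "(\<Sum>i<Suc k. ?g i) = (\<Sum>i<k. f i) + a" by simp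
  moreover have "\<forall>i<Suc k. ?g i \<in> A" using f(2) assms(2) by (auto simp: less_Suc_eq)
  ultimately show ?thesis unfolding sumset_def using f(1)
    by (intro CollectI exI[of _ ?g]) simp
qed

lemma sumset_0: "0 \<in> sumset 0 A"
  unfolding sumset_def by auto

lemma sumset_mult:
  assumes "x \<in> sumset k A" "a \<in> A" shows "x + int c * a \<in> sumset (k + c) A"
proof (induction c)
  case 0 then show ?case using assms by simp
next
  case (Suc c)
  have "x + int c * a + a \<in> sumset (Suc (k + c)) A" using sumset_add1[OF Suc assms(2)] .
  then show ?case by (simp add: algebra_simps)
qed

lemma cone_sumset_aux:
  assumes "finite B" "B \<subseteq> A"
  shows "(\<Sum>a\<in>B. int (n a) * a) \<in> sumset (\<Sum>a\<in>B. n a) A"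
  using assms
proof (induction B rule: finite_induct)
  case empty then show ?case using sumset_0 by simp
next
  case (insert b B)
  have "(\<Sum>a\<in>B. int (n a) * a) + int (n b) * b \<in> sumset ((\<Sum>a\<in>B. n a) + n b) A"
    using sumset_mult insert by auto
  then show ?case using insert by (simp add: add.commute)
qed

lemma cone_sumset:
  assumes "finite A" "p \<in> coneA A"
  shows "snd p \<ge> 0 \<and> fst p \<in> sumset (nat (snd p)) A"
proof -
  obtain n where n: "p = ((\<Sum>a\<in>A. int (n a) * a), (\<Sum>a\<in>A. int (n a)))"
    using assms(2) unfolding coneA_def by blast
  have s: "snd p = int (\<Sum>a\<in>A. n a)" using n by simp
  have f: "fst p = (\<Sum>a\<in>A. int (n a) * a)" using n by simp
  have "0 \<le> int (\<Sum>a\<in>A. n a)" by (rule of_nat_0_le_iff)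
  moreover have "(\<Sum>a\<in>A. int (n a) * a) \<in> sumset (nat (int (\<Sum>a\<in>A. n a))) A"
    unfolding nat_int by (rule cone_sumset_aux[OF assms(1) order_refl])
  ultimately show ?thesis unfolding f s by blast
qed

lemma cone_add1:
  assumes "finite A" "(x, y) \<in> coneA A" "a \<in> A"
  shows "(x + a, y + 1) \<in> coneA A"
proof -
  obtain n where n: "x = (\<Sum>c\<in>A. int (n c) * c)" "y = (\<Sum>c\<in>A. int (n c))"
    using assms(2) unfolding coneA_def by blast
  let ?m = "n(a := Suc (n a))"
  have d: "A = insert a (A - {a})" using assms(3) by blast
  have s1: "(\<Sum>c\<in>A - {a}. int (?m c) * c) = (\<Sum>c\<in>A - {a}. int (n c) * c)"
    by (rule sum.cong) auto
  have s2: "(\<Sum>c\<in>A - {a}. int (?m c)) = (\<Sum>c\<in>A - {a}. int (n c))"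
    by (rule sum.cong) auto
  have r1: "(\<Sum>c\<in>A. int (?m c) * c) = int (?m a) * a + (\<Sum>c\<in>A - {a}. int (?m c) * c)"
    by (rule sum.remove[OF assms(1,3)])
  have r2: "(\<Sum>c\<in>A. int (n c) * c) = int (n a) * a + (\<Sum>c\<in>A - {a}. int (n c) * c)"
    by (rule sum.remove[OF assms(1,3)])
  have r3: "(\<Sum>c\<in>A. int (?m c)) = int (?m a) + (\<Sum>c\<in>A - {a}. int (?m c))"
    by (rule sum.remove[OF assms(1,3)])
  have r4: "(\<Sum>c\<in>A. int (n c)) = int (n a) + (\<Sum>c\<in>A - {a}. int (n c))"
    by (rule sum.remove[OF assms(1,3)])
  have ma: "int (?m a) = int (n a) + 1" by simp
  have ma2: "int (?m a) * a = int (n a) * a + a" unfolding ma by (simp add: distrib_right)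
  have e1: "(\<Sum>c\<in>A. int (?m c) * c) = x + a"
    using r1 r2 s1 ma2 n(1) by linarith
  have e2: "(\<Sum>c\<in>A. int (?m c)) = y + 1"
    using r3 r4 s2 ma n(2) by linarith
  show ?thesis unfolding coneA_def
    by (rule CollectI, rule exI[of _ ?m]) (simp only: e1 e2)
qed

lemma sumset_cone:
  assumes "finite A" "x \<in> sumset k A"
  shows "(x, int k) \<in> coneA A"
  using assms(2)
proof (induction k arbitrary: x)
  case 0
  then have "x = 0" unfolding sumset_def by auto
  moreover have "(0, 0) \<in> coneA A"
  proof -
    show ?thesis unfolding coneA_def by (rule CollectI, rule exI[of _ "\<lambda>_. 0"]) simp
  qed
  ultimately show ?case by simp
next
  case (Suc k)
  obtain f where f: "x = (\<Sum>i<Suc k. f i)" "\<forall>i<Suc k. f i \<in> A" using Suc.prems unfolding sumset_def by blast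
  have "(\<Sum>i<k. f i) \<in> sumset k A" unfolding sumset_def using f(2) by auto
  then have "((\<Sum>i<k. f i), int k) \<in> coneA A" by (rule Suc.IH)
  from cone_add1[OF assms(1) this, of "f k"] f show ?case by (simp add: add.commute)
qed

lemma sumset_nonneg:
  assumes "\<forall>a\<in>A. a \<ge> 0" "x \<in> sumset k A" shows "x \<ge> 0"
  using assms unfolding sumset_def by (auto intro!: sum_nonneg)

theorem proposition5p4:
  fixes A :: "int set" and b :: int and g h :: "int \<Rightarrow> int"
  assumes "finite A" and "A \<noteq> {}"
    and "Min A = 0" and "Max A = b" and "Gcd A = 1"
    and "\<forall>a\<in>{0..<b}. g a \<ge> 0 \<and> h a \<ge> 0
           \<and> Sa A b a \<subseteq> translate (g a, h a) (LatPlus b)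
           \<and> finite (translate (g a, h a) (LatPlus b) - Sa A b a)"
  shows "(\<Union>k. sumset k A) = (\<Union>a\<in>{0..<b}. {g a + b * int n | n :: nat. True})"
proof -
  have nn: "\<forall>a\<in>A. a \<ge> 0" using assms(1,2,3) by (metis Min_le)
  have le: "\<forall>a\<in>A. a \<le> b" using assms(1,2,4) by (metis Max_ge)
  have bpos: "b > 0"
  proof (rule ccontr)
    assume "\<not> b > 0"
    then have "\<forall>a\<in>A. a = 0" using nn le by force
    then have "A = {0}" using assms(2) by auto
    then show False using assms(5) by simp
  qed
  show ?thesis
  proof (rule set_eqI, rule iffI)
    fix x assume "x \<in> (\<Union>k. sumset k A)"
    then obtain k where xk: "x \<in> sumset k A" by blast
    have c: "(x, int k) \<in> coneA A" using sumset_cone[OF assms(1) xk] .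
    define a where "a = x mod b"
    have a: "a \<in> {0..<b}" using bpos unfolding a_def by simp
    have "(x - a, int k - 1) \<in> Lat b" unfolding Lat_def
    proof -
      have "x - a = b * (x div b)" unfolding a_def by (simp add: minus_mod_eq_mult_div)
      moreover have "int k - 1 = (int k - 1 - x div b) + x div b" by simp
      ultimately show "(x - a, int k - 1) \<in> {(b * n, m + n) |m n. True}" by blast
    qed
    then have "(x, int k) \<in> Sa A b a" using c unfolding Sa_def by simp
    then have "(x, int k) \<in> translate (g a, h a) (LatPlus b)" using assms(6) a by blast
    then obtain n :: nat where "x = g a + b * int n" unfolding translate_def LatPlus_def by auto
    then show "x \<in> (\<Union>a\<in>{0..<b}. {g a + b * int n | n :: nat. True})" using a by blast
  next
    fix x assume "x \<in> (\<Union>a\<in>{0..<b}. {g a + b * int n | n :: nat. True})"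
    then obtain a n where a: "a \<in> {0..<b}" and x: "x = g a + b * int n" by blast
    let ?T = "translate (g a, h a) (LatPlus b)"
    let ?F = "?T - Sa A b a"
    have fin: "finite ?F" using assms(6) a by blast
    let ?p = "\<lambda>k::nat. (g a + b * int n, h a + (int k + int n))"
    have inj: "inj ?p" by (rule injI) simp
    have inT: "?p k \<in> ?T" for k
    proof -
      have q: "(b * int n, int k + int n) \<in> LatPlus b" unfolding LatPlus_def by blast
      show ?thesis unfolding translate_def
        by (rule CollectI, rule exI[of _ "(b * int n, int k + int n)"]) (simp add: q)
    qed
    have "\<not> range ?p \<subseteq> ?F"
      using fin inj by (meson finite_imageD finite_subset infinite_UNIV_nat)
    then obtain k where "?p k \<notin> ?F" by blast
    then have "?p k \<in> Sa A b a" using inT by blast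
    then have "?p k \<in> coneA A" unfolding Sa_def by blast
    from cone_sumset[OF assms(1) this] x show "x \<in> (\<Union>k. sumset k A)" by auto
  qed
qed

end
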